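(* Let $G$ be a finite bipartite graph. If $G$ has a nonempty channel, then the number $m_G$ of perfect matchings of $G$ is even.
   Context: A channel of a graph $G=(V,E)$ is a set $C\subseteq V$ such that every vertex of $G$ is adjacent to an even number of vertices of $C$. *)

theory Defs
  imports Main
begin

definition simple_graph :: "'a set \<Rightarrow> 'a set set \<Rightarrow> bool" where
  "simple_graph V E \<longleftrightarrow> finite V \<and> (\<forall>e\<in>E. e \<subseteq> V \<and> card e = 2)"

definition adjacent :: "'a set set \<Rightarrow> 'a \<Rightarrow> 'a \<Rightarrow> bool" where
  "adjacent E u v \<longleftrightarrow> {u, v} \<in> E"

definition bipartite :: "'a set \<Rightarrow> 'a set set \<Rightarrow> bool" where
  "bipartite V E \<longleftrightarrow> (\<exists>X Y. X \<union> Y = V \<and> X \<inter> Y = {} \<and>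
      (\<forall>e\<in>E. card (e \<inter> X) = 1 \<and> card (e \<inter> Y) = 1))"

definition perfect_matching :: "'a set \<Rightarrow> 'a set set \<Rightarrow> 'a set set \<Rightarrow> bool" where
  "perfect_matching V E M \<longleftrightarrow> M \<subseteq> E \<and> (\<forall>v\<in>V. \<exists>!e. e \<in> M \<and> v \<in> e)"

definition num_perfect_matchings :: "'a set \<Rightarrow> 'a set set \<Rightarrow> nat" where
  "num_perfect_matchings V E = card {M. perfect_matching V E M}"

definition channel :: "'a set \<Rightarrow> 'a set set \<Rightarrow> 'a set \<Rightarrow> bool" where
  "channel V E C \<longleftrightarrow> C \<subseteq> V \<and> (\<forall>v\<in>V. even (card {u\<in>C. adjacent E v u}))"

end

theory Submission imports Defs "HOL-Library.Z2" "HOL-Library.FuncSet" begin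
declare add_bit_eq_xor[simp del] mult_bit_eq_and[simp del]

lemma bit_double: "(x::bit) + x = 0" by (metis bit_2_eq_0 mult_2 mult_zero_left)
lemma of_nat_bit: "(of_nat n = (0::bit)) \<longleftrightarrow> even n"
  by (metis bit_2_eq_0 dvd_0_left_iff even_of_nat)

lemma sum_invol_bit:
  assumes "finite S" "\<And>s. s\<in>S \<Longrightarrow> g s \<in> S" "\<And>s. s\<in>S \<Longrightarrow> g (g s) = s"
    "\<And>s. s\<in>S \<Longrightarrow> g s \<noteq> s" "\<And>s. s\<in>S \<Longrightarrow> f (g s) = f s"
  shows "sum f S = (0::bit)"
  using assms
proof (induction S rule: finite_psubset_induct)
  case (psubset S)
  show ?case
  proof (cases "S = {}")
    case True then show ?thesis by simp
  next
    case False
    then obtain s where s: "s \<in> S" by blast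
    let ?S' = "S - {s, g s}"
    have IH: "sum f ?S' = 0"
    proof (rule psubset.IH)
      show "?S' \<subset> S" using s by blast
    next
      fix t assume t: "t \<in> ?S'"
      then have "g t \<noteq> s" using psubset.prems(2) by (metis DiffE insertCI)
      moreover have "g t \<noteq> g s" using t psubset.prems(2) by (metis DiffE insertCI s)
      ultimately show "g t \<in> ?S'" using t psubset.prems(1) by auto
    qed (use psubset.prems in auto)
    have sub: "{s, g s} \<subseteq> S" using s psubset.prems by auto
    have "sum f S = sum f ?S' + sum f {s, g s}"
      using sum.subset_diff[OF sub psubset.hyps(1)] by simp
    also have "sum f {s, g s} = f s + f (g s)"
      using psubset.prems(3)[OF s] by (simp add: eq_commute)
    also have "\<dots> = 0" using psubset.prems(4)[OF s] bit_double by simp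
    finally show ?thesis using IH by simp
  qed
qed

lemma main_lemma:
  assumes fin: "finite V" and E: "\<forall>e\<in>E. e \<subseteq> V \<and> card e = 2"
    and XY: "X \<union> Y = V" "X \<inter> Y = {}"
    and cross: "\<forall>e\<in>E. card (e \<inter> X) = 1 \<and> card (e \<inter> Y) = 1"
    and ch: "\<forall>v\<in>V. even (card {u\<in>C. {v,u} \<in> E})" and CV: "C \<subseteq> V"
    and x0: "x0 \<in> C" "x0 \<in> X"
  shows "even (card {M. perfect_matching V E M})"
proof -
  have finX: "finite X" and finY: "finite Y" using fin XY by auto
  have edge: "\<exists>x y. x \<in> X \<and> y \<in> Y \<and> e = {x,y}" if "e \<in> E" for e
  proof -
    have "card (e \<inter> X) = 1" "card (e \<inter> Y) = 1" using cross that by auto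
    then obtain x y where x: "e \<inter> X = {x}" and y: "e \<inter> Y = {y}" by (meson card_1_singletonE)
    have "e = (e \<inter> X) \<union> (e \<inter> Y)" using E that XY by blast
    then show ?thesis using x y by blast
  qed
  have XtoY: "v \<in> Y" if h1: "{u,v} \<in> E" and h2: "u \<in> X" for u v
  proof -
    obtain x y where "x \<in> X" "y \<in> Y" "{u,v} = {x,y}" using edge h1 by blast
    then show ?thesis using h2 XY(2) by (auto simp: doubleton_eq_iff)
  qed
  have YtoX: "v \<in> X" if h1: "{u,v} \<in> E" and h2: "u \<in> Y" for u v
  proof -
    obtain x y where "x \<in> X" "y \<in> Y" "{u,v} = {x,y}" using edge h1 by blast
    then show ?thesis using h2 XY(2) by (auto simp: doubleton_eq_iff)
  qed
  define B where "B = {\<sigma> \<in> X \<rightarrow>\<^sub>E Y. bij_betw \<sigma> X Y}"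
  define P where "P = {\<sigma> \<in> B. \<forall>x\<in>X. {x, \<sigma> x} \<in> E}"
  define F where "F = (\<lambda>\<sigma>. (\<lambda>x. {x, \<sigma> x}) ` X)"
  have finB: "finite B" unfolding B_def using finX finY
    by (auto intro: finite_subset[OF _ finite_PiE[OF finX, of "\<lambda>_. Y"]])
  have pmF: "perfect_matching V E (F \<sigma>)" if s: "\<sigma> \<in> P" for \<sigma>
  proof -
    have sX: "\<sigma> x \<in> Y" if "x \<in> X" for x using s that unfolding P_def B_def by auto
    have bij: "bij_betw \<sigma> X Y" using s unfolding P_def B_def by auto
    have ed: "{x, \<sigma> x} \<in> E" if "x \<in> X" for x using s that unfolding P_def by auto
    show ?thesis unfolding perfect_matching_def
    proof (intro conjI ballI)
      show "F \<sigma> \<subseteq> E" unfolding F_def using ed by auto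
    next
      fix v assume v: "v \<in> V"
      show "\<exists>!e. e \<in> F \<sigma> \<and> v \<in> e"
      proof (cases "v \<in> X")
        case True
        show ?thesis
        proof (rule ex1I[of _ "{v, \<sigma> v}"])
          show "{v, \<sigma> v} \<in> F \<sigma> \<and> v \<in> {v, \<sigma> v}" unfolding F_def using True by auto
        next
          fix e assume "e \<in> F \<sigma> \<and> v \<in> e"
          then obtain x where x: "x \<in> X" "e = {x, \<sigma> x}" "v \<in> e" unfolding F_def by auto
          then have "v = x \<or> v = \<sigma> x" by auto
          moreover have "v \<noteq> \<sigma> x" using sX[OF x(1)] True XY(2) by auto
          ultimately show "e = {v, \<sigma> v}" using x by auto
        qed
      next
        case False
        then have vY: "v \<in> Y" using v XY by auto
        then obtain x where x: "x \<in> X" "\<sigma> x = v" using bij by (metis bij_betw_iff_bijections)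
        show ?thesis
        proof (rule ex1I[of _ "{x, v}"])
          show "{x, v} \<in> F \<sigma> \<and> v \<in> {x, v}" unfolding F_def using x by auto
        next
          fix e assume "e \<in> F \<sigma> \<and> v \<in> e"
          then obtain x' where x': "x' \<in> X" "e = {x', \<sigma> x'}" "v \<in> e" unfolding F_def by auto
          then have "v = x' \<or> v = \<sigma> x'" by auto
          then have "v = \<sigma> x'" using x'(1) False by auto
          then have "x' = x" using bij x x'(1) unfolding bij_betw_def inj_on_def by metis
          then show "e = {x, v}" using x' x by auto
        qed
      qed
    qed
  qed
  have injF: "inj_on F P"
  proof (rule inj_onI)
    fix \<sigma> \<tau> assume s: "\<sigma> \<in> P" and t: "\<tau> \<in> P" and eq: "F \<sigma> = F \<tau>"
    show "\<sigma> = \<tau>"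
    proof
      fix x show "\<sigma> x = \<tau> x"
      proof (cases "x \<in> X")
        case True
        then have "{x, \<sigma> x} \<in> F \<tau>" using eq unfolding F_def by auto
        then obtain x' where x': "x' \<in> X" "{x, \<sigma> x} = {x', \<tau> x'}" unfolding F_def by auto
        have "\<tau> x' \<in> Y" using t x'(1) unfolding P_def B_def by auto
        then have "x \<noteq> \<tau> x'" using True XY(2) by auto
        then have "x = x'" "\<sigma> x = \<tau> x'" using x'(2) by (auto simp: doubleton_eq_iff)
        then show ?thesis by simp
      next
        case False
        then show ?thesis using s t unfolding P_def B_def by (auto simp: PiE_def extensional_def)
      qed
    qed
  qed
  have pmP: "M \<in> F ` P" if pm: "perfect_matching V E M" for M
  proof -
    have ME: "M \<subseteq> E" and uniq: "\<And>v. v \<in> V \<Longrightarrow> \<exists>!e. e \<in> M \<and> v \<in> e"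
      using pm unfolding perfect_matching_def by auto
    have exy: "\<exists>y. {x, y} \<in> M" if xX: "x \<in> X" for x
    proof -
      obtain e where e: "e \<in> M" "x \<in> e" using uniq[of x] xX XY by auto
      obtain a b where "a \<in> X" "b \<in> Y" "e = {a,b}" using edge ME e(1) by blast
      then have "e = {x, b}" using e(2) that XY(2) by auto
      then show ?thesis using e by auto
    qed
    have uny: "y = y'" if "{x, y} \<in> M" "{x, y'} \<in> M" "x \<in> X" for x y y'
    proof -
      have "{x,y} = {x,y'}" using uniq[of x] that XY by auto
      then show ?thesis by (auto simp: doubleton_eq_iff)
    qed
    define \<sigma> where "\<sigma> = (\<lambda>x\<in>X. THE y. {x, y} \<in> M)"
    have sM: "{x, \<sigma> x} \<in> M" if xX: "x \<in> X" for x
    proof -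
      obtain y where "{x,y} \<in> M" using exy xX by blast
      then have "(THE y. {x, y} \<in> M) = y" using uny that by blast
      then show ?thesis unfolding \<sigma>_def using that \<open>{x,y} \<in> M\<close> by simp
    qed
    have sY: "\<sigma> x \<in> Y" if "x \<in> X" for x using XtoY sM ME that by blast
    have inj: "inj_on \<sigma> X"
    proof (rule inj_onI)
      fix x x' assume x: "x \<in> X" "x' \<in> X" "\<sigma> x = \<sigma> x'"
      have "\<sigma> x \<in> V" using sY x XY by auto
      then have u: "\<exists>!e. e \<in> M \<and> \<sigma> x \<in> e" using uniq by blast
      have "{x, \<sigma> x} \<in> M" "{x', \<sigma> x'} \<in> M" using sM x(1,2) by auto
      then have "{x, \<sigma> x} = {x', \<sigma> x'}" using u x(3) by auto
      moreover have "x \<noteq> \<sigma> x'" using sY[OF x(2)] x(1) XY(2) by auto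
      ultimately show "x = x'" using x by (auto simp: doubleton_eq_iff)
    qed
    have surj: "\<sigma> ` X = Y"
    proof
      show "\<sigma> ` X \<subseteq> Y" using sY by auto
    next
      show "Y \<subseteq> \<sigma> ` X"
      proof
        fix y assume y: "y \<in> Y"
        obtain e where e: "e \<in> M" "y \<in> e" using uniq[of y] y XY by auto
        obtain a b where ab: "a \<in> X" "b \<in> Y" "e = {a,b}" using edge ME e(1) by blast
        then have "y = b" using e(2) y XY(2) by auto
        then have "{a, y} \<in> M" using ab e by simp
        then have "\<sigma> a = y" using uny[OF sM[OF ab(1)]] ab(1) by simp
        then show "y \<in> \<sigma> ` X" using ab(1) by auto
      qed
    qed
    have sP: "\<sigma> \<in> P" unfolding P_def B_def bij_betw_def
      using inj surj sY sM ME by (auto simp: \<sigma>_def)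
    have "F \<sigma> = M"
    proof
      show "F \<sigma> \<subseteq> M" unfolding F_def using sM by auto
    next
      show "M \<subseteq> F \<sigma>"
      proof
        fix e assume e: "e \<in> M"
        obtain a b where ab: "a \<in> X" "b \<in> Y" "e = {a,b}" using edge ME e by blast
        then have "b = \<sigma> a" using uny[OF _ sM[OF ab(1)]] e by simp
        then show "e \<in> F \<sigma>" unfolding F_def using ab by auto
      qed
    qed
    then show ?thesis using sP by blast
  qed
  have cardPM: "card {M. perfect_matching V E M} = card P"
  proof -
    have "{M. perfect_matching V E M} = F ` P" using pmF pmP by auto
    then show ?thesis using card_image[OF injF] by simp
  qed
  define a where "a = (\<lambda>x y. if {x,y} \<in> E then (1::bit) else 0)"
  have PB: "P \<subseteq> B" unfolding P_def by auto
  have prod01: "(\<Prod>x\<in>X. a x (\<sigma> x)) = (if \<sigma> \<in> P then 1 else 0)" if s: "\<sigma> \<in> B" for \<sigma>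
  proof (cases "\<sigma> \<in> P")
    case True
    then have "\<forall>x\<in>X. a x (\<sigma> x) = 1" unfolding P_def a_def by auto
    then show ?thesis using True by simp
  next
    case False
    then obtain x where "x \<in> X" "{x, \<sigma> x} \<notin> E" using s unfolding P_def by auto
    then have "\<exists>x\<in>X. a x (\<sigma> x) = 0" unfolding a_def by auto
    then show ?thesis using False finX by (simp add: prod_zero)
  qed
  have s2: "of_nat (card P) = (\<Sum>\<sigma>\<in>B. \<Prod>x\<in>X. a x (\<sigma> x))"
  proof -
    have "(\<Sum>\<sigma>\<in>B. \<Prod>x\<in>X. a x (\<sigma> x)) = (\<Sum>\<sigma>\<in>B. if \<sigma> \<in> P then 1 else 0)"
      using prod01 by (rule sum.cong[OF refl])
    also have "\<dots> = (\<Sum>\<sigma>\<in>B \<inter> P. 1)" using sum.inter_restrict[OF finB, of "\<lambda>_. (1::bit)" P] by simp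
    also have "B \<inter> P = P" using PB by auto
    finally show ?thesis by simp
  qed
  define D where "D = C \<inter> X - {x0}"
  have finCX: "finite (C \<inter> X)" using finX by auto
  have finD: "finite D" unfolding D_def using finCX by auto
  have ax0: "a x0 y = (\<Sum>x1\<in>D. a x1 y)" if y: "y \<in> Y" for y
  proof -
    have "{u\<in>C. {y,u} \<in> E} = {u\<in>C \<inter> X. {u,y} \<in> E}"
      using YtoX y by (auto simp: insert_commute)
    moreover have "even (card {u\<in>C. {y,u} \<in> E})" using ch y XY by auto
    ultimately have ev: "even (card {u\<in>C \<inter> X. {u,y} \<in> E})" by simp
    have "(\<Sum>u\<in>C \<inter> X. a u y) = (\<Sum>u\<in>{u\<in>C \<inter> X. {u,y} \<in> E}. 1)"
      unfolding a_def using sum.inter_filter[OF finCX, of "\<lambda>_. (1::bit)" "\<lambda>u. {u,y} \<in> E"] by simp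
    also have "\<dots> = 0" using ev of_nat_bit by simp
    finally have z: "(\<Sum>u\<in>C \<inter> X. a u y) = 0" .
    have "(\<Sum>u\<in>C \<inter> X. a u y) = a x0 y + (\<Sum>x1\<in>D. a x1 y)"
      unfolding D_def using sum.remove[OF finCX, of x0] x0 by simp
    then have "a x0 y + (\<Sum>x1\<in>D. a x1 y) = 0" using z by simp
    then show ?thesis by (metis add.assoc add_0_right bit_double)
  qed
  define R where "R = (\<lambda>\<sigma>. \<Prod>x\<in>X - {x0}. a x (\<sigma> x))"
  have inner: "(\<Sum>\<sigma>\<in>B. a x1 (\<sigma> x0) * R \<sigma>) = 0" if x1: "x1 \<in> D" for x1
  proof -
    have x1X: "x1 \<in> X" and x10: "x1 \<noteq> x0" using x1 unfolding D_def by auto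
    define h where "h = (\<lambda>x. if x = x0 then x1 else if x = x1 then x0 else x)"
    have hh: "h (h x) = x" for x unfolding h_def using x10 by auto
    have hX: "h x \<in> X" if "x \<in> X" for x unfolding h_def using that x1X x0 by auto
    have bh: "bij_betw h X X"
      by (rule bij_betw_byWitness[where f'=h]) (use hh hX in auto)
    show ?thesis
    proof (rule sum_invol_bit[where g="\<lambda>\<sigma>. \<sigma> \<circ> h"])
      show "finite B" by (rule finB)
    next
      fix \<sigma> assume s: "\<sigma> \<in> B"
      have sPi: "\<sigma> \<in> X \<rightarrow>\<^sub>E Y" and sb: "bij_betw \<sigma> X Y" using s unfolding B_def by auto
      have "\<sigma> \<circ> h \<in> X \<rightarrow>\<^sub>E Y"
      proof -
        have "\<sigma> (h x) \<in> Y" if "x \<in> X" for x using sPi hX that by auto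
        moreover have "\<sigma> (h x) = undefined" if "x \<notin> X" for x
        proof -
          have "h x = x" unfolding h_def using that x1X x0 by auto
          then show ?thesis using sPi that by auto
        qed
        ultimately show ?thesis by auto
      qed
      moreover have "bij_betw (\<sigma> \<circ> h) X Y" using bij_betw_trans[OF bh sb] .
      ultimately show "\<sigma> \<circ> h \<in> B" unfolding B_def by auto
      show "\<sigma> \<circ> h \<circ> h = \<sigma>" using hh by (auto simp: fun_eq_iff)
      have "\<sigma> x1 \<noteq> \<sigma> x0" using sb x1X x0 x10 unfolding bij_betw_def inj_on_def by metis
      moreover have "h x0 = x1" unfolding h_def by simp
      ultimately show "\<sigma> \<circ> h \<noteq> \<sigma>" by (metis comp_apply)
      have finX0: "finite (X - {x0})" using finX by auto
      have x1X0: "x1 \<in> X - {x0}" using x1X x10 by auto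
      define Q where "Q = (\<Prod>x\<in>X - {x0} - {x1}. a x (\<sigma> x))"
      have RS: "R \<sigma> = a x1 (\<sigma> x1) * Q"
        unfolding R_def Q_def using prod.remove[OF finX0 x1X0] by simp
      have "R (\<sigma> \<circ> h) = a x1 (\<sigma> (h x1)) * (\<Prod>x\<in>X - {x0} - {x1}. a x (\<sigma> (h x)))"
        unfolding R_def using prod.remove[OF finX0 x1X0, of "\<lambda>x. a x ((\<sigma> \<circ> h) x)"] by simp
      also have "(\<Prod>x\<in>X - {x0} - {x1}. a x (\<sigma> (h x))) = Q"
        unfolding Q_def by (rule prod.cong) (auto simp: h_def)
      also have "h x1 = x0" unfolding h_def using x10 by simp
      finally have RG: "R (\<sigma> \<circ> h) = a x1 (\<sigma> x0) * Q" .
      have hx0: "h x0 = x1" unfolding h_def by simp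
      show "a x1 ((\<sigma> \<circ> h) x0) * R (\<sigma> \<circ> h) = a x1 (\<sigma> x0) * R \<sigma>"
        using RS RG hx0 by (simp add: mult.left_commute)
    qed
  qed
  have "(\<Sum>\<sigma>\<in>B. \<Prod>x\<in>X. a x (\<sigma> x)) = (\<Sum>\<sigma>\<in>B. (\<Sum>x1\<in>D. a x1 (\<sigma> x0)) * R \<sigma>)"
  proof (rule sum.cong[OF refl])
    fix \<sigma> assume s: "\<sigma> \<in> B"
    have "\<sigma> x0 \<in> Y" using s x0 unfolding B_def by auto
    then show "(\<Prod>x\<in>X. a x (\<sigma> x)) = (\<Sum>x1\<in>D. a x1 (\<sigma> x0)) * R \<sigma>"
      unfolding R_def using prod.remove[OF finX x0(2), of "\<lambda>x. a x (\<sigma> x)"] ax0 by simp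
  qed
  also have "\<dots> = (\<Sum>\<sigma>\<in>B. \<Sum>x1\<in>D. a x1 (\<sigma> x0) * R \<sigma>)" by (simp add: sum_distrib_right)
  also have "\<dots> = (\<Sum>x1\<in>D. \<Sum>\<sigma>\<in>B. a x1 (\<sigma> x0) * R \<sigma>)" by (rule sum.swap)
  also have "\<dots> = 0" using inner by simp
  finally have "of_nat (card P) = (0::bit)" using s2 by simp
  then show ?thesis using cardPM of_nat_bit by simp
qed


theorem corollary5p3:
  fixes V :: "'a set" and E :: "'a set set" and C :: "'a set"
  assumes "simple_graph V E"
    and "bipartite V E"
    and "channel V E C"
    and "C \<noteq> {}"
  shows "even (num_perfect_matchings V E)"
proof -
  have fin: "finite V" and E: "\<forall>e\<in>E. e \<subseteq> V \<and> card e = 2"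
    using assms(1) unfolding simple_graph_def by auto
  obtain X Y where XY: "X \<union> Y = V" "X \<inter> Y = {}"
    and cross: "\<forall>e\<in>E. card (e \<inter> X) = 1 \<and> card (e \<inter> Y) = 1"
    using assms(2) unfolding bipartite_def by blast
  have CV: "C \<subseteq> V" and ch: "\<forall>v\<in>V. even (card {u\<in>C. {v,u} \<in> E})"
    using assms(3) unfolding channel_def adjacent_def by auto
  obtain c where c: "c \<in> C" using assms(4) by blast
  then have "c \<in> X \<or> c \<in> Y" using CV XY by auto
  then show ?thesis
  proof
    assume "c \<in> X"
    then show ?thesis unfolding num_perfect_matchings_def
      using main_lemma[OF fin E XY cross ch CV c] by simp
  next
    assume "c \<in> Y"
    moreover have "Y \<union> X = V" "Y \<inter> X = {}" using XY by auto
    moreover have "\<forall>e\<in>E. card (e \<inter> Y) = 1 \<and> card (e \<inter> X) = 1" using cross by auto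
    ultimately show ?thesis unfolding num_perfect_matchings_def
      using main_lemma[OF fin E _ _ _ ch CV c, of Y X] by simp
  qed
qed

end
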